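(* Let $m$ be a positive integer, $b\in\mathbb{F}_{2^{2m}}$, and let $\gamma$ be a primitive element of $\mathbb{F}_{2^{2m}}$. Put $t=\frac{2^{2m}-1}{3}$. Then $g(x)=x^{t+1}+bx$ is a permutation polynomial of $\mathbb{F}_{2^{2m}}$ if and only if \[ b\neq \frac{\gamma^{t i'}\left(\gamma^{3(k-k')+\frac{2^{2m}+2}{3}(i-i')}+1\right)}{\gamma^{3(k-k')+i-i'}+1}\quad\text{and}\quad b\neq\gamma^{ts} \] for all integers $i,i'$ with $0\le i,i'\le 2$, $i\neq i'$, all $s$ with $0\le s\le 2$, and all $k,k'$ with $1\le k,k'\le t$.
   Context: A polynomial is a permutation polynomial of a finite field if it induces a bijection of that field. Note $3\mid 2^{2m}-1$, so $t$ is an integer. *)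

theory Defs
  imports "HOL-Computational_Algebra.Polynomial"
begin

definition permutation_polynomial :: "'a::comm_semiring_0 poly \<Rightarrow> bool" where
  "permutation_polynomial p \<longleftrightarrow> bij (poly p)"

definition primitive_element :: "'a::field \<Rightarrow> bool" where
  "primitive_element \<gamma> \<longleftrightarrow> \<gamma> \<noteq> 0 \<and> (\<forall>x. x \<noteq> 0 \<longrightarrow> (\<exists>n::nat. x = \<gamma> ^ n))"

end

theory Submission imports Defs begin


context
  fixes \<gamma> :: "'a::{field,finite}"
  assumes prim: "primitive_element \<gamma>"
begin

lemma g_nz: "\<gamma> \<noteq> 0" using prim by (simp add: primitive_element_def)

lemma card_nz: "card (UNIV - {0::'a}) = card (UNIV::'a set) - 1"
  by (simp add: card_Diff_singleton)

lemma pow_min: assumes "\<gamma> ^ d = 1" "0 < d" shows "card (UNIV::'a set) - 1 \<le> d"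
proof (rule ccontr)
  assume nle: "\<not> ?thesis"
  have "UNIV - {0::'a} \<subseteq> (\<lambda>n. \<gamma> ^ n) ` {..<d}"
  proof
    fix x :: 'a assume "x \<in> UNIV - {0}"
    then obtain n where n: "x = \<gamma> ^ n" using prim by (auto simp: primitive_element_def)
    have "\<gamma> ^ n = \<gamma> ^ (d * (n div d) + n mod d)" by simp
    also have "\<dots> = \<gamma> ^ (n mod d)" by (subst power_add, subst power_mult) (simp add: assms)
    finally show "x \<in> (\<lambda>n. \<gamma> ^ n) ` {..<d}" using n assms by auto
  qed
  then have "card (UNIV - {0::'a}) \<le> card ((\<lambda>n. \<gamma> ^ n) ` {..<d})" by (rule card_mono[rotated]) auto
  also have "\<dots> \<le> d" using card_image_le[of "{..<d}"] by simp
  finally show False using nle card_nz by simp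
qed

lemma pow_period: "\<gamma> ^ (card (UNIV::'a set) - 1) = 1"
proof -
  let ?N = "card (UNIV::'a set) - 1"
  have "\<not> inj_on (\<lambda>n. \<gamma> ^ n) {0..?N}"
  proof
    assume inj: "inj_on (\<lambda>n. \<gamma> ^ n) {0..?N}"
    have "(\<lambda>n. \<gamma> ^ n) ` {0..?N} \<subseteq> UNIV - {0}" using g_nz by auto
    then have "card ((\<lambda>n. \<gamma> ^ n) ` {0..?N}) \<le> card (UNIV - {0::'a})" by (intro card_mono) auto
    then have "?N + 1 \<le> ?N" using card_image[OF inj] card_nz by simp
    then show False by simp
  qed
  then obtain a c where ac: "a \<le> ?N" "c \<le> ?N" "a \<noteq> c" "\<gamma> ^ a = \<gamma> ^ c"
    unfolding inj_on_def by auto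
  have "\<exists>d. 0 < d \<and> d \<le> ?N \<and> \<gamma> ^ d = 1"
  proof (cases "a < c")
    case True
    have "\<gamma> ^ c = \<gamma> ^ a * \<gamma> ^ (c - a)" using True by (simp flip: power_add)
    then have "\<gamma> ^ (c - a) = 1" using ac g_nz by simp
    then show ?thesis using True ac by (intro exI[of _ "c - a"]) auto
  next
    case False
    then have "a > c" using ac by simp
    have "\<gamma> ^ a = \<gamma> ^ c * \<gamma> ^ (a - c)" using \<open>a > c\<close> by (simp flip: power_add)
    then have "\<gamma> ^ (a - c) = 1" using ac g_nz by simp
    then show ?thesis using \<open>a > c\<close> ac by (intro exI[of _ "a - c"]) auto
  qed
  then obtain d where d: "0 < d" "d \<le> ?N" "\<gamma> ^ d = 1" by blast
  with pow_min have "d = ?N" by fastforce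
  with d show ?thesis by simp
qed

lemma pow_mod: "\<gamma> ^ e = \<gamma> ^ (e mod (card (UNIV::'a set) - 1))"
proof -
  let ?N = "card (UNIV::'a set) - 1"
  have "\<gamma> ^ e = \<gamma> ^ (?N * (e div ?N) + e mod ?N)" by simp
  also have "\<dots> = \<gamma> ^ (e mod ?N)" by (subst power_add, subst power_mult) (subst pow_period, simp)
  finally show ?thesis .
qed

lemma pow_eq1: "\<gamma> ^ e = 1 \<longleftrightarrow> (card (UNIV::'a set) - 1) dvd e"
proof
  assume "\<gamma> ^ e = 1"
  then have h: "\<gamma> ^ (e mod (card (UNIV::'a set) - 1)) = 1" using pow_mod by simp
  have "card {0::'a, 1} \<le> card (UNIV::'a set)" by (rule card_mono) auto
  then have "card (UNIV::'a set) \<ge> 2" by simp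
  then have "e mod (card (UNIV::'a set) - 1) < card (UNIV::'a set) - 1" by simp
  then have "e mod (card (UNIV::'a set) - 1) = 0" using pow_min[OF h] by (metis leD neq0_conv)
  then show "(card (UNIV::'a set) - 1) dvd e" by (simp add: dvd_eq_mod_eq_0)
next
  assume "(card (UNIV::'a set) - 1) dvd e"
  then obtain c where "e = (card (UNIV::'a set) - 1) * c" by blast
  then show "\<gamma> ^ e = 1" using pow_period by (simp add: power_mult)
qed

lemma pow_inj: assumes "a < card (UNIV::'a set) - 1" "c < card (UNIV::'a set) - 1" "\<gamma> ^ a = \<gamma> ^ c" shows "a = c"
proof (rule ccontr)
  assume "a \<noteq> c"
  { fix a c :: nat assume "a < c" "c < card (UNIV::'a set) - 1" "\<gamma> ^ a = \<gamma> ^ c"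
    have "\<gamma> ^ c = \<gamma> ^ a * \<gamma> ^ (c - a)" using \<open>a < c\<close> by (simp flip: power_add)
    then have "\<gamma> ^ (c - a) = 1" using \<open>\<gamma> ^ a = \<gamma> ^ c\<close> g_nz by simp
    with pow_min have False using \<open>a < c\<close> \<open>c < _\<close> by fastforce }
  with assms \<open>a \<noteq> c\<close> show False by (metis linorder_neqE_nat)
qed

lemma nz_rep: assumes "x \<noteq> 0" shows "\<exists>n < card (UNIV::'a set) - 1. x = \<gamma> ^ n"
proof -
  obtain n where "x = \<gamma> ^ n" using prim assms by (auto simp: primitive_element_def)
  moreover have "card (UNIV::'a set) - 1 > 0" using assms
    by (metis card_nz card_gt_0_iff finite_Diff finite_UNIV Diff_iff UNIV_I empty_iff singletonD)
  ultimately show ?thesis using pow_mod by (metis mod_less_divisor)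
qed


lemma char2: assumes "card (UNIV::'a set) = 2 ^ (2 * m)" "m > 0" shows "(-1::'a) = 1"
proof -
  have "(-1::'a) \<noteq> 0" by simp
  then obtain n where n: "(-1::'a) = \<gamma> ^ n" using prim unfolding primitive_element_def by blast
  have "\<gamma> ^ (2 * n) = (\<gamma> ^ n)^2" by (metis mult.commute power_mult)
  also have "\<dots> = 1" unfolding n[symmetric] by simp
  finally have "\<gamma> ^ (2 * n) = 1" .
  then have d: "(card (UNIV::'a set) - 1) dvd 2 * n" using pow_eq1 by blast
  have "odd (card (UNIV::'a set) - 1)" using assms by simp
  then have "(card (UNIV::'a set) - 1) dvd n" using d
    using coprime_dvd_mult_right_iff[of "card (UNIV::'a set) - 1" 2 n] by simp
  then show ?thesis using pow_eq1 n by simp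
qed

lemma neg_self: assumes "(-1::'a) = 1" shows "- (x::'a) = x"
proof -
  have "- x = (-1) * x" by simp
  then show ?thesis using assms by simp
qed

lemma pow_t: assumes "card (UNIV::'a set) - 1 = 3 * t" shows "(\<gamma> ^ n) ^ t = \<gamma> ^ (t * (n mod 3))"
proof -
  have "(\<gamma> ^ n) ^ t = \<gamma> ^ ((card (UNIV::'a set) - 1) * (n div 3) + t * (n mod 3))"
    unfolding assms power_mult[symmetric]
    by (metis (no_types, lifting) mult.commute mult.left_commute div_mult_mod_eq distrib_left)
  also have "\<dots> = \<gamma> ^ (t * (n mod 3))" by (subst power_add, subst power_mult, subst pow_period, simp)
  finally show ?thesis .
qed

lemma expr_eq:
  fixes n n' ni ni' t :: nat and k k' i i' c :: int
  assumes "int n = 3*(k-1) + i" "int n' = 3*(k'-1) + i'" "i = int ni" "i' = int ni'" "c = int t + 1"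
  shows "\<gamma> powi (int t * i') * (\<gamma> powi (3 * (k - k') + c * (i - i')) + 1) /
              (\<gamma> powi (3 * (k - k') + i - i') + 1)
     = (\<gamma>^n * \<gamma>^(t*ni) + \<gamma>^n' * \<gamma>^(t*ni')) / (\<gamma>^n + \<gamma>^n')"
proof -
  have e1: "3 * (k - k') + i - i' = int n - int n'" using assms by simp
  have e2: "3 * (k - k') + c * (i - i') = int (n + t*ni) - int (n' + t*ni')"
    using assms by (simp add: algebra_simps)
  have e3: "int t * i' = int (t * ni')" using assms by simp
  have gz: "\<gamma> \<noteq> 0" by (rule g_nz)
  define x where "x = \<gamma>^n"
  define y where "y = \<gamma>^n'"
  define A where "A = \<gamma>^(t*ni)"
  define B where "B = \<gamma>^(t*ni')"
  have nz: "y \<noteq> 0" "B \<noteq> 0" using gz by (auto simp: y_def B_def)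
  have "\<gamma> powi (int t * i') * (\<gamma> powi (3 * (k - k') + c * (i - i')) + 1) /
              (\<gamma> powi (3 * (k - k') + i - i') + 1) = B * ((x*A)/(y*B) + 1) / (x/y + 1)"
    unfolding e1 e2 e3
    by (simp only: power_int_diff[OF disjI1[OF gz]] power_int_of_nat) (simp add: x_def y_def A_def B_def power_add)
  also have "\<dots> = (x*A + y*B)/(x+y)"
  proof (cases "x + y = 0")
    case True
    then have "x/y + 1 = 0" using nz by (simp add: field_simps)
    then show ?thesis using True by simp
  next
    case False
    have h1: "B * ((x*A)/(y*B) + 1) = (x*A+y*B)/y" using nz by (simp add: field_simps)
    have h2: "x/y + 1 = (x+y)/y" using nz by (simp add: field_simps)
    show ?thesis unfolding h1 h2 using nz False by simp
  qed
  finally show ?thesis by (simp add: x_def y_def A_def B_def)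
qed

end

lemma three_dvd: "3 dvd (2 ^ (2 * m) - 1 :: nat)"
proof -
  have "(4::nat) ^ m mod 3 = (4 mod 3) ^ m mod 3" by (rule power_mod[symmetric])
  then have "(4::nat) ^ m mod 3 = 1" by simp
  moreover have "(2::nat) ^ (2 * m) = 4 ^ m" by (simp add: power_mult)
  ultimately show ?thesis by (metis dvd_minus_mod minus_mod_eq_mult_div mod_mod_trivial)
qed

theorem proposition3:
  fixes m :: nat and b \<gamma> :: "'a::{field,finite}"
  assumes "m > 0"
    and "card (UNIV :: 'a set) = 2 ^ (2 * m)"
    and "primitive_element \<gamma>"
  defines "t \<equiv> (2 ^ (2 * m) - 1) div 3"
  shows "permutation_polynomial (monom 1 (t + 1) + monom b 1) \<longleftrightarrow>
    ((\<forall>i i' k k' :: int. 0 \<le> i \<and> i \<le> 2 \<and> 0 \<le> i' \<and> i' \<le> 2 \<and> i \<noteq> i' \<and>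
        1 \<le> k \<and> k \<le> int t \<and> 1 \<le> k' \<and> k' \<le> int t \<longrightarrow>
        b \<noteq> \<gamma> powi (int t * i') *
              (\<gamma> powi (3 * (k - k') + ((2 ^ (2 * m) + 2) div 3) * (i - i')) + 1) /
              (\<gamma> powi (3 * (k - k') + i - i') + 1)) \<and>
     (\<forall>s::nat. s \<le> 2 \<longrightarrow> b \<noteq> \<gamma> ^ (t * s)))"
proof -
  note prim = assms(3)
  define N where "N = card (UNIV :: 'a set) - 1"
  have N3: "N = 3 * t" unfolding N_def t_def assms(2) using three_dvd[of m] by simp
  have pos: "(2::nat) ^ (2*m) \<ge> 4" using assms(1)
    by (metis One_nat_def le_add2 mult_le_mono2 nat_mult_1_right power_increasing
        power2_eq_square numeral_Bit0 numeral_One le_numeral_extra(4) Suc_leI mult_2 one_add_one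
        power_mult zero_less_numeral)
  have tpos: "t > 0" using N3 pos unfolding N_def assms(2) by simp
  have c_eq: "((2 ^ (2 * m) + 2) div 3 :: int) = int t + 1"
  proof -
    have "(2::nat) ^ (2*m) = 3 * t + 1" using N3 pos unfolding N_def assms(2) by simp
    then have "(2::int) ^ (2*m) = 3 * int t + 1" by (metis of_nat_numeral of_nat_power of_nat_add of_nat_mult of_nat_1)
    then show ?thesis by simp
  qed
  have ch: "(-1::'a) = 1" by (rule char2[OF prim assms(2) assms(1)])
  have ns: "- (x::'a) = x" for x by (rule neg_self[OF prim ch])
  have dbl: "(x::'a) + x = 0" for x by (metis ns add.right_inverse)
  have gz: "\<gamma> \<noteq> 0" by (rule g_nz[OF prim])
  have two: "(2::'a) = 0" using dbl[of 1] by (simp add: one_add_one)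
  have pt: "(\<gamma> ^ n) ^ t = \<gamma> ^ (t * (n mod 3))" for n using pow_t[OF prim, of t n] N3 N_def by simp
  define g where "g = (\<lambda>x::'a. x * x ^ t + b * x)"
  have poly_g: "poly (monom 1 (t + 1) + monom b 1) = g"
    by (simp add: fun_eq_iff poly_monom g_def)
  have perm: "permutation_polynomial (monom 1 (t + 1) + monom b 1) \<longleftrightarrow> inj g"
    unfolding permutation_polynomial_def poly_g bij_def using finite_UNIV_inj_surj[of g] by auto
  have Aneq: "\<gamma> ^ (t * ni) \<noteq> \<gamma> ^ (t * ni')" if "ni < 3" "ni' < 3" "ni \<noteq> ni'" for ni ni'
  proof
    assume "\<gamma> ^ (t * ni) = \<gamma> ^ (t * ni')"
    moreover have "t * ni < card (UNIV::'a set) - 1" "t * ni' < card (UNIV::'a set) - 1"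
      using that tpos N3 N_def by auto
    ultimately have "t * ni = t * ni'" using pow_inj[OF prim] by blast
    then show False using that tpos by simp
  qed
  have eqsum: "u = v" if "u + v = 0" for u v :: 'a
    using that by (metis add_eq_0_iff ns)
  let ?C1 = "\<forall>i i' k k' :: int. 0 \<le> i \<and> i \<le> 2 \<and> 0 \<le> i' \<and> i' \<le> 2 \<and> i \<noteq> i' \<and>
        1 \<le> k \<and> k \<le> int t \<and> 1 \<le> k' \<and> k' \<le> int t \<longrightarrow>
        b \<noteq> \<gamma> powi (int t * i') *
              (\<gamma> powi (3 * (k - k') + ((2 ^ (2 * m) + 2) div 3) * (i - i')) + 1) /
              (\<gamma> powi (3 * (k - k') + i - i') + 1)"
  let ?C2 = "\<forall>s::nat. s \<le> 2 \<longrightarrow> b \<noteq> \<gamma> ^ (t * s)"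
  show ?thesis
  proof -
    have gfac: "g x = x * (x ^ t + b)" for x by (simp add: g_def algebra_simps)
    have "inj g \<longleftrightarrow> ?C1 \<and> ?C2"
    proof
      assume inj: "inj g"
      have C2: "\<forall>s::nat. s \<le> 2 \<longrightarrow> b \<noteq> \<gamma> ^ (t * s)"
      proof (intro allI impI notI)
        fix s :: nat assume "s \<le> 2" "b = \<gamma> ^ (t * s)"
        have "(\<gamma> ^ s) ^ t = b" using \<open>b = _\<close> by (simp add: power_mult mult.commute flip: power_mult)
        then have "g (\<gamma> ^ s) = g 0" by (simp add: gfac dbl)
        then have "\<gamma> ^ s = 0" using inj by (meson injD)
        then show False using gz by simp
      qed
      have C1: ?C1
      proof (intro allI impI notI)
        fix i i' k k' :: int
        assume r: "0 \<le> i \<and> i \<le> 2 \<and> 0 \<le> i' \<and> i' \<le> 2 \<and> i \<noteq> i' \<and>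
          1 \<le> k \<and> k \<le> int t \<and> 1 \<le> k' \<and> k' \<le> int t"
        assume beq: "b = \<gamma> powi (int t * i') *
              (\<gamma> powi (3 * (k - k') + ((2 ^ (2 * m) + 2) div 3) * (i - i')) + 1) /
              (\<gamma> powi (3 * (k - k') + i - i') + 1)"
        define ni where "ni = nat i"
        define ni' where "ni' = nat i'"
        define n where "n = 3 * (nat k - 1) + ni"
        define n' where "n' = 3 * (nat k' - 1) + ni'"
        have ii: "i = int ni" "i' = int ni'" using r by (auto simp: ni_def ni'_def)
        have nn: "int n = 3*(k-1) + i" "int n' = 3*(k'-1) + i'" using r ii
          by (auto simp: n_def n'_def of_nat_diff)
        have nmod: "n mod 3 = ni" "n' mod 3 = ni'" using r ii by (auto simp: n_def n'_def)
        have nlt: "ni < 3" "ni' < 3" "ni \<noteq> ni'" using r ii by auto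
        define x where "x = \<gamma> ^ n"
        define y where "y = \<gamma> ^ n'"
        define A where "A = \<gamma> ^ (t * ni)"
        define B where "B = \<gamma> ^ (t * ni')"
        have xt: "x ^ t = A" "y ^ t = B" using pt nmod by (auto simp: x_def y_def A_def B_def)
        have "A \<noteq> B" using Aneq nlt by (simp add: A_def B_def)
        then have xy: "x \<noteq> y" using xt by auto
        have xy0: "x + y \<noteq> 0" using xy eqsum by blast
        have "b = (x * A + y * B) / (x + y)"
          using beq expr_eq[OF prim nn ii c_eq]
          by (simp add: x_def y_def A_def B_def)
        then have bxy: "b * (x + y) = x * A + y * B" using xy0 by simp
        have "g x + g y = 0"
          unfolding g_def xt
          by (metis (no_types, lifting) add.assoc add.commute bxy dbl distrib_left mult.commute)
        then have "g x = g y" by (rule eqsum)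
        then show False using inj xy by (meson injD)
      qed
      show "?C1 \<and> ?C2" using C1 C2 by blast
    next
      assume "?C1 \<and> ?C2"
      then have C1: ?C1 and C2: ?C2 by blast+
      have nz: "g z \<noteq> 0" if zn: "z \<noteq> 0" for z
      proof
        assume "g z = 0"
        obtain n where n: "z = \<gamma> ^ n" using prim zn by (auto simp: primitive_element_def)
        have "z ^ t + b = 0" using \<open>g z = 0\<close> zn by (simp add: gfac)
        then have "b = \<gamma> ^ (t * (n mod 3))" using pt n eqsum by (metis add.commute)
        then show False using C2 by simp
      qed
      show "inj g"
      proof (rule injI, rule ccontr)
        fix x y assume gxy: "g x = g y" and xy: "x \<noteq> y"
        have g0: "g 0 = 0" by (simp add: g_def)
        have x0: "x \<noteq> 0"
        proof
          assume "x = 0" then show False using gxy xy nz g0 by metis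
        qed
        have y0: "y \<noteq> 0"
        proof
          assume "y = 0" then show False using gxy xy nz g0 by metis
        qed
        obtain n where n: "n < N" "x = \<gamma> ^ n" using nz_rep[OF prim x0] N_def by blast
        obtain n' where n': "n' < N" "y = \<gamma> ^ n'" using nz_rep[OF prim y0] N_def by blast
        define ni where "ni = n mod 3"
        define ni' where "ni' = n' mod 3"
        define A where "A = \<gamma> ^ (t * ni)"
        define B where "B = \<gamma> ^ (t * ni')"
        have xt: "x ^ t = A" "y ^ t = B" using pt n n' by (auto simp: ni_def ni'_def A_def B_def)
        have xy0: "x + y \<noteq> 0" using xy eqsum by blast
        have bxy: "b * (x + y) = x * A + y * B"
        proof -
          have "x * A + b * x = y * B + b * y" using gxy xt by (simp add: g_def)
          then have "(x * A + b * x) + (y * B + b * y) = 0" by (metis dbl)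
          then have "b * (x + y) + (x * A + y * B) = 0" by (simp add: algebra_simps)
          then show ?thesis by (rule eqsum)
        qed
        show False
        proof (cases "ni = ni'")
          case True
          then have "A = B" by (simp add: A_def B_def)
          have "A + b \<noteq> 0"
          proof
            assume "A + b = 0"
            then have "b = A" using eqsum by (metis add.commute)
            moreover have "ni \<le> 2" by (simp add: ni_def)
            ultimately show False using C2 A_def by blast
          qed
          have "(x + y) * (A + b) = 0" using bxy \<open>A = B\<close> by (simp add: algebra_simps two)
          then show False using xy0 \<open>A + b \<noteq> 0\<close> by simp
        next
          case False
          define k where "k = int (n div 3) + 1"
          define k' where "k' = int (n' div 3) + 1"
          have nn: "int n = 3*(k-1) + int ni" "int n' = 3*(k'-1) + int ni'"
          proof -
            have q: "\<And>q::nat. int q = 3 * int (q div 3) + int (q mod 3)"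
              by (metis div_mult_mod_eq mult.commute of_nat_add of_nat_mult of_nat_numeral)
            show "int n = 3*(k-1) + int ni" "int n' = 3*(k'-1) + int ni'"
              unfolding k_def k'_def ni_def ni'_def using q[of n] q[of n'] by simp_all
          qed
          have rk: "1 \<le> k" "k \<le> int t" "1 \<le> k'" "k' \<le> int t"
            using n n' N3 by (auto simp: k_def k'_def)
          have ri: "0 \<le> int ni" "int ni \<le> 2" "0 \<le> int ni'" "int ni' \<le> 2" "int ni \<noteq> int ni'"
            using False by (auto simp: ni_def ni'_def)
          have "b = (x * A + y * B) / (x + y)" using bxy xy0 by (simp add: field_simps)
          also have "\<dots> = \<gamma> powi (int t * int ni') *
              (\<gamma> powi (3 * (k - k') + ((2 ^ (2 * m) + 2) div 3) * (int ni - int ni')) + 1) /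
              (\<gamma> powi (3 * (k - k') + int ni - int ni') + 1)"
            using expr_eq[OF prim nn refl refl c_eq]
            by (simp add: n n' A_def B_def)
          finally show False using C1 rk ri by blast
        qed
      qed
    qed
    then show ?thesis using perm by simp
  qed
qed

end
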